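(* Let $K$ be a field, let $A$ be a finitely generated $K$-algebra that is a (right and left) Goldie domain, with quotient division algebra $Q(A)$, and let $E$ be a division subalgebra of $Q(A)$. If $Q(A)$ is infinite dimensional as a right $E$-vector space, then $AE$ is infinite dimensional as a right $E$-vector space.
   Context: $AE$ denotes the right $E$-subspace of $Q(A)$ consisting of finite sums $\sum a_ie_i$ with $a_i\in A$, $e_i\in E$. A Goldie domain has a classical (Ore) quotient division algebra $Q(A)$, in which every finite set of elements has a common left denominator from $A$. *)

theory Defs
  imports Main
begin

text \<open>Everything lives inside a division ring D (a type of class division_ring),
which plays the role of Q(A). Subsets of D model K, A and E.\<close>

definition subring :: "'a::ring_1 set \<Rightarrow> bool" where
  "subring B \<longleftrightarrow> 0 \<in> B \<and> 1 \<in> B \<and> (\<forall>x\<in>B. \<forall>y\<in>B. x + y \<in> B \<and> x * y \<in> B) \<and> (\<forall>x\<in>B. - x \<in> B)"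

definition division_subring :: "'a::division_ring set \<Rightarrow> bool" where
  "division_subring E \<longleftrightarrow> subring E \<and> (\<forall>x\<in>E. inverse x \<in> E)"

text \<open>K is a (commutative) subfield lying in the centre of D; this is how the
structure map of the K-algebra A (and of Q(A)) is modelled.\<close>
definition central_subfield :: "'a::division_ring set \<Rightarrow> bool" where
  "central_subfield K \<longleftrightarrow> division_subring K \<and> (\<forall>k\<in>K. \<forall>x. k * x = x * k)"

definition gen_algebra :: "'a::ring_1 set \<Rightarrow> 'a set \<Rightarrow> 'a set" where
  "gen_algebra K S = \<Inter>{B. subring B \<and> K \<subseteq> B \<and> S \<subseteq> B}"

definition finitely_generated_algebra :: "'a::ring_1 set \<Rightarrow> 'a set \<Rightarrow> bool" where
  "finitely_generated_algebra K A \<longleftrightarrow> (\<exists>S. finite S \<and> A = gen_algebra K S)"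

definition right_ideal :: "'a::ring_1 set \<Rightarrow> 'a set \<Rightarrow> bool" where
  "right_ideal A I \<longleftrightarrow> I \<subseteq> A \<and> 0 \<in> I \<and> (\<forall>x\<in>I. \<forall>y\<in>I. x + y \<in> I) \<and> (\<forall>x\<in>I. - x \<in> I)
     \<and> (\<forall>x\<in>I. \<forall>a\<in>A. x * a \<in> I)"

definition left_ideal :: "'a::ring_1 set \<Rightarrow> 'a set \<Rightarrow> bool" where
  "left_ideal A I \<longleftrightarrow> I \<subseteq> A \<and> 0 \<in> I \<and> (\<forall>x\<in>I. \<forall>y\<in>I. x + y \<in> I) \<and> (\<forall>x\<in>I. - x \<in> I)
     \<and> (\<forall>x\<in>I. \<forall>a\<in>A. a * x \<in> I)"

definition right_annihilator :: "'a::ring_1 set \<Rightarrow> 'a set \<Rightarrow> 'a set" where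
  "right_annihilator A X = {a\<in>A. \<forall>x\<in>X. x * a = 0}"

definition left_annihilator :: "'a::ring_1 set \<Rightarrow> 'a set \<Rightarrow> 'a set" where
  "left_annihilator A X = {a\<in>A. \<forall>x\<in>X. a * x = 0}"

definition independent_family :: "(nat \<Rightarrow> 'a::ring_1 set) \<Rightarrow> bool" where
  "independent_family I \<longleftrightarrow>
     (\<forall>n x. (\<forall>i<n. x i \<in> I i) \<and> (\<Sum>i<n. x i) = 0 \<longrightarrow> (\<forall>i<n. x i = 0))"

text \<open>Right Goldie: ACC on right annihilators and finite right uniform dimension
(no infinite direct sum of nonzero right ideals). Similarly on the left.\<close>
definition right_goldie :: "'a::ring_1 set \<Rightarrow> bool" where
  "right_goldie A \<longleftrightarrow>
     \<not> (\<exists>X :: nat \<Rightarrow> 'a set. (\<forall>n. X n \<subseteq> A) \<and>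
           (\<forall>n. right_annihilator A (X n) \<subset> right_annihilator A (X (Suc n)))) \<and>
     \<not> (\<exists>I :: nat \<Rightarrow> 'a set. (\<forall>n. right_ideal A (I n) \<and> I n \<noteq> {0}) \<and> independent_family I)"

definition left_goldie :: "'a::ring_1 set \<Rightarrow> bool" where
  "left_goldie A \<longleftrightarrow>
     \<not> (\<exists>X :: nat \<Rightarrow> 'a set. (\<forall>n. X n \<subseteq> A) \<and>
           (\<forall>n. left_annihilator A (X n) \<subset> left_annihilator A (X (Suc n)))) \<and>
     \<not> (\<exists>I :: nat \<Rightarrow> 'a set. (\<forall>n. left_ideal A (I n) \<and> I n \<noteq> {0}) \<and> independent_family I)"

text \<open>A subring of a division ring is automatically a domain.\<close>
definition classical_quotient_ring_of :: "'a::division_ring set \<Rightarrow> bool" where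
  "classical_quotient_ring_of A \<longleftrightarrow>
     (\<forall>q. \<exists>a\<in>A. \<exists>b\<in>A. b \<noteq> 0 \<and> q = a * inverse b) \<and>
     (\<forall>q. \<exists>a\<in>A. \<exists>b\<in>A. b \<noteq> 0 \<and> q = inverse b * a)"

definition right_span :: "'a::ring_1 set \<Rightarrow> 'a set \<Rightarrow> 'a set" where
  "right_span E S = {(\<Sum>x\<in>F. x * c x) | F c. finite F \<and> F \<subseteq> S \<and> c ` F \<subseteq> E}"

definition right_fin_dim :: "'a::ring_1 set \<Rightarrow> 'a set \<Rightarrow> bool" where
  "right_fin_dim E V \<longleftrightarrow> (\<exists>F. finite F \<and> F \<subseteq> V \<and> V \<subseteq> right_span E F)"

end

theory Submission
  imports Defs
begin

lemma span_intro:
  assumes "finite F" "F \<subseteq> S" "c ` F \<subseteq> E" "v = (\<Sum>x\<in>F. x * c x)"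
  shows "v \<in> right_span E S"
  unfolding right_span_def
  by (rule CollectI, rule exI[of _ F], rule exI[of _ c]) (simp add: assms)

lemma span_0: "0 \<in> right_span E S"
  unfolding right_span_def by (rule CollectI, rule exI[of _ "{}"], auto)

lemma span_base: "subring E \<Longrightarrow> x \<in> S \<Longrightarrow> x \<in> right_span E S"
  unfolding right_span_def subring_def
  by (rule CollectI, rule exI[of _ "{x}"], rule exI[of _ "\<lambda>_. 1"], auto)

lemma span_smult:
  assumes "subring E" "v \<in> right_span E S" "e \<in> E"
  shows "v * e \<in> right_span E S"
proof -
  obtain F c where F: "finite F" "F \<subseteq> S" "c ` F \<subseteq> E" "v = (\<Sum>x\<in>F. x * c x)"
    using assms(2) unfolding right_span_def by blast
  have "v * e = (\<Sum>x\<in>F. x * c x * e)"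
    unfolding F(4) by (rule sum_distrib_right)
  also have "\<dots> = (\<Sum>x\<in>F. x * (c x * e))"
    by (simp only: mult.assoc)
  finally have "v * e = (\<Sum>x\<in>F. x * (c x * e))" .
  moreover have "(\<lambda>x. c x * e) ` F \<subseteq> E" using F(3) assms(1,3) unfolding subring_def image_subset_iff by blast
  ultimately show ?thesis using F by (intro span_intro[of F _ "\<lambda>x. c x * e"]) auto
qed

lemma span_add:
  assumes "subring E" "u \<in> right_span E S" "v \<in> right_span E S"
  shows "u + v \<in> right_span E S"
proof -
  obtain F1 c1 where F1: "finite F1" "F1 \<subseteq> S" "c1 ` F1 \<subseteq> E" "u = (\<Sum>x\<in>F1. x * c1 x)"
    using assms(2) unfolding right_span_def by blast
  obtain F2 c2 where F2: "finite F2" "F2 \<subseteq> S" "c2 ` F2 \<subseteq> E" "v = (\<Sum>x\<in>F2. x * c2 x)"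
    using assms(3) unfolding right_span_def by blast
  define c where "c x = (if x \<in> F1 then c1 x else 0) + (if x \<in> F2 then c2 x else 0)" for x
  have fin: "finite (F1 \<union> F2)" using F1 F2 by auto
  have "(\<Sum>x\<in>F1 \<union> F2. x * c x) = (\<Sum>x\<in>F1 \<union> F2. (if x \<in> F1 then x * c1 x else 0))
      + (\<Sum>x\<in>F1 \<union> F2. (if x \<in> F2 then x * c2 x else 0))"
    unfolding sum.distrib[symmetric] by (rule sum.cong) (auto simp: c_def distrib_left)
  also have "\<dots> = u + v"
  proof -
    have "(F1 \<union> F2) \<inter> F1 = F1" "(F1 \<union> F2) \<inter> F2 = F2" by auto
    then show ?thesis
      using sum.inter_restrict[OF fin, of "\<lambda>x. x * c1 x" F1] sum.inter_restrict[OF fin, of "\<lambda>x. x * c2 x" F2]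
      by (simp add: F1(4) F2(4))
  qed
  finally have eq: "u + v = (\<Sum>x\<in>F1 \<union> F2. x * c x)" by simp
  have "c ` (F1 \<union> F2) \<subseteq> E" using F1(3) F2(3) assms(1) unfolding c_def subring_def image_subset_iff by auto
  then show ?thesis using eq fin F1(2) F2(2) by (intro span_intro[of "F1 \<union> F2" _ c]) auto
qed

lemma span_diff:
  assumes "subring E" "u \<in> right_span E S" "v \<in> right_span E S"
  shows "u - v \<in> right_span E S"
proof -
  have "-1 \<in> E" using assms(1) unfolding subring_def by auto
  then have "v * (-1) \<in> right_span E S" using span_smult assms by blast
  then have "u + v * (-1) \<in> right_span E S" using span_add[OF assms(1,2)] by blast
  then show ?thesis by simp
qed

lemma span_sum:
  assumes "subring E" "finite I" "\<forall>i\<in>I. g i \<in> right_span E S"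
  shows "sum g I \<in> right_span E S"
  using assms(2,3)
proof (induction I rule: finite_induct)
  case empty then show ?case by (simp add: span_0)
next
  case (insert x F) then show ?case using span_add[OF assms(1)] by simp
qed

lemma span_mono: "S \<subseteq> T \<Longrightarrow> right_span E S \<subseteq> right_span E T"
  unfolding right_span_def by blast

lemma span_empty: "v \<in> right_span E {} \<Longrightarrow> v = 0"
  unfolding right_span_def by auto

lemma span_insert:
  assumes "subring E" "v \<in> right_span E (insert f F)"
  shows "\<exists>w d. w \<in> right_span E F \<and> d \<in> E \<and> v = w + f * d"
proof -
  obtain G c where G: "finite G" "G \<subseteq> insert f F" "c ` G \<subseteq> E" "v = (\<Sum>x\<in>G. x * c x)"
    using assms(2) unfolding right_span_def by blast
  show ?thesis
  proof (cases "f \<in> G")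
    case True
    have "v = (\<Sum>x\<in>G - {f}. x * c x) + f * c f"
      using G(1,4) True by (simp add: sum.remove add.commute)
    moreover have "(\<Sum>x\<in>G - {f}. x * c x) \<in> right_span E F"
      using G by (intro span_intro[of "G - {f}" _ c]) auto
    moreover have "c f \<in> E" using True G(3) by auto
    ultimately show ?thesis by blast
  next
    case False
    have "v \<in> right_span E F" using G False by (intro span_intro[of G _ c]) auto
    moreover have "0 \<in> E" using assms(1) unfolding subring_def by auto
    ultimately show ?thesis by (intro exI[of _ v] exI[of _ 0]) simp
  qed
qed

lemma sum_split_nat: "(\<Sum>k<m+n. g k) = (\<Sum>k<m. g k) + (\<Sum>i<n. g (m+i))"
  for g :: "nat \<Rightarrow> 'b::comm_monoid_add"
  by (induct n) (auto simp: add.assoc)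

lemma subring_sum: assumes "subring E" "finite I" "\<forall>i\<in>I. g i \<in> E" shows "sum g I \<in> E"
  using assms(2,3) by (induction I rule: finite_induct) (use assms(1) in \<open>auto simp: subring_def\<close>)

lemma dep:
  fixes E F :: "'a::division_ring set"
  assumes E: "division_subring E" and fin: "finite F"
  shows "\<forall>v::nat\<Rightarrow>'a. (\<forall>i. v i \<in> right_span E F) \<longrightarrow>
    (\<exists>n c. (\<forall>i. c i \<in> E) \<and> (\<exists>i<n. c i \<noteq> 0) \<and> (\<Sum>i<n. v i * c i) = 0)"
proof -
  have sE: "subring E" using E unfolding division_subring_def by auto
  have invE: "\<And>x. x \<in> E \<Longrightarrow> inverse x \<in> E" using E unfolding division_subring_def by auto
  have mE: "\<And>x y. x \<in> E \<Longrightarrow> y \<in> E \<Longrightarrow> x * y \<in> E" using sE unfolding subring_def by auto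
  have nE: "\<And>x. x \<in> E \<Longrightarrow> - x \<in> E" using sE unfolding subring_def by auto
  have zE: "0 \<in> E" using sE unfolding subring_def by auto
  show ?thesis
  using fin
proof (induction F rule: finite_induct)
  case empty
  show ?case
  proof (intro allI impI)
    fix v :: "nat \<Rightarrow> 'a" assume "\<forall>i. v i \<in> right_span E {}"
    then have "v 0 = 0" using span_empty by blast
    then show "\<exists>n c. (\<forall>i. c i \<in> E) \<and> (\<exists>i<n. c i \<noteq> 0) \<and> (\<Sum>i<n. v i * c i) = 0"
      using sE unfolding subring_def by (intro exI[of _ 1] exI[of _ "\<lambda>_. 1"]) auto
  qed
next
  case (insert f F)
  show ?case
  proof (intro allI impI)
    fix v :: "nat \<Rightarrow> 'a" assume v: "\<forall>i. v i \<in> right_span E (insert f F)"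
    have "\<forall>i. \<exists>w d. w \<in> right_span E F \<and> d \<in> E \<and> v i = w + f * d"
      using v span_insert[OF sE] by blast
    then obtain w d where wd: "\<And>i. w i \<in> right_span E F" "\<And>i. d i \<in> E" "\<And>i. v i = w i + f * d i"
      by metis
    show "\<exists>n c. (\<forall>i. c i \<in> E) \<and> (\<exists>i<n. c i \<noteq> 0) \<and> (\<Sum>i<n. v i * c i) = 0"
    proof (cases "\<forall>i. d i = 0")
      case True
      then have "\<forall>i. v i \<in> right_span E F" using wd by simp
      then show ?thesis using insert.IH by blast
    next
      case False
      then obtain j where j: "d j \<noteq> 0" by blast
      define u where "u i = v (j + 1 + i) - v j * (inverse (d j) * d (j + 1 + i))" for i
      have u_eq: "u i = w (j + 1 + i) - w j * (inverse (d j) * d (j + 1 + i))" for i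
      proof -
        have k: "d j * (inverse (d j) * d (j + 1 + i)) = d (j + 1 + i)"
          using j by (simp add: mult.assoc[symmetric])
        have "u i = w (j + 1 + i) + f * d (j + 1 + i) - (w j * (inverse (d j) * d (j + 1 + i))
            + f * (d j * (inverse (d j) * d (j + 1 + i))))"
          unfolding u_def wd(3)[of "j+1+i"] wd(3)[of j] by (simp add: distrib_right mult.assoc)
        also have "\<dots> = w (j + 1 + i) - w j * (inverse (d j) * d (j + 1 + i))"
          unfolding k by simp
        finally show ?thesis .
      qed
      have "\<forall>i. u i \<in> right_span E F"
        unfolding u_eq using span_diff[OF sE] span_smult[OF sE] wd(1,2) invE mE by metis
      then obtain n c where c: "\<forall>i. c i \<in> E" "\<exists>i<n. c i \<noteq> 0" "(\<Sum>i<n. u i * c i) = 0"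
        using insert.IH by blast
      define S where "S = (\<Sum>i<n. d (j + 1 + i) * c i)"
      have SE: "S \<in> E" unfolding S_def by (rule subring_sum[OF sE]) (simp_all add: mE wd(2) c(1))
      define C where "C k = (if k < j then 0 else if k = j then - (inverse (d j) * S) else c (k - j - 1))" for k
      have CE: "\<forall>k. C k \<in> E" 
      proof
        fix k show "C k \<in> E" unfolding C_def using zE nE[OF mE[OF invE[OF wd(2)] SE]] c(1) by simp
      qed
      obtain i0 where i0: "i0 < n" "c i0 \<noteq> 0" using c(2) by blast
      have "C (j + 1 + i0) \<noteq> 0" unfolding C_def using i0 by simp
      moreover have "j + 1 + i0 < (j + 1) + n" using i0 by simp
      moreover have "(\<Sum>k<(j+1)+n. v k * C k) = 0"
      proof -
        have "(\<Sum>k<(j+1)+n. v k * C k) = (\<Sum>k<j+1. v k * C k) + (\<Sum>i<n. v (j+1+i) * C (j+1+i))"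
          by (rule sum_split_nat)
        also have "(\<Sum>k<j+1. v k * C k) = v j * C j"
          by (simp add: C_def)
        also have "(\<Sum>i<n. v (j+1+i) * C (j+1+i)) = (\<Sum>i<n. v (j+1+i) * c i)"
          by (simp add: C_def)
        also have "(\<Sum>i<n. v (j+1+i) * c i) = (\<Sum>i<n. u i * c i) + v j * (inverse (d j) * S)"
          unfolding u_def S_def
          by (simp add: algebra_simps sum.distrib sum_subtractf sum_distrib_left)
        finally show ?thesis using c(3) by (simp add: C_def)
      qed
      ultimately show ?thesis using CE by blast
    qed
  qed
qed
qed


lemma subring_pow: "subring A \<Longrightarrow> b \<in> A \<Longrightarrow> b ^ i \<in> A"
  by (induct i) (auto simp: subring_def)

theorem mainTheorem5:
  fixes K A E :: "'a::division_ring set"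
  assumes K: "central_subfield K"
    and A_sub: "subring A" and KA: "K \<subseteq> A"
    and A_fg: "finitely_generated_algebra K A"
    and A_goldie: "right_goldie A" "left_goldie A"
    and Q: "classical_quotient_ring_of A"
    and E: "division_subring E" and KE: "K \<subseteq> E"
    and inf: "\<not> right_fin_dim E (UNIV :: 'a set)"
  shows "\<not> right_fin_dim E (right_span E A)"
proof
  assume "right_fin_dim E (right_span E A)"
  then obtain F where F: "finite F" "F \<subseteq> right_span E A" "right_span E A \<subseteq> right_span E F"
    unfolding right_fin_dim_def by blast
  have sE: "subring E" using E unfolding division_subring_def by auto
  have invE: "\<And>x. x \<in> E \<Longrightarrow> inverse x \<in> E" using E unfolding division_subring_def by auto
  have nE: "\<And>x. x \<in> E \<Longrightarrow> - x \<in> E" using sE unfolding subring_def by auto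
  have mA: "\<And>x y. x \<in> A \<Longrightarrow> y \<in> A \<Longrightarrow> x * y \<in> A" using A_sub unfolding subring_def by auto
  have all: "q \<in> right_span E A" for q
  proof -
    obtain a b where ab: "a \<in> A" "b \<in> A" "b \<noteq> 0" "q = inverse b * a"
      using Q unfolding classical_quotient_ring_of_def by blast
    define v where "v i = b ^ i * a" for i
    have vA: "v i \<in> A" for i unfolding v_def using mA subring_pow[OF A_sub ab(2)] ab(1) by blast
    have "\<forall>i. v i \<in> right_span E F" using vA span_base[OF sE] F(3) by blast
    then obtain n c where c: "\<forall>i. c i \<in> E" "\<exists>i<n. c i \<noteq> 0" "(\<Sum>i<n. v i * c i) = 0"
      using dep[OF E F(1)] by blast
    define k where "k = (LEAST i. i < n \<and> c i \<noteq> 0)"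
    have k: "k < n" "c k \<noteq> 0" using LeastI_ex[OF c(2)] unfolding k_def by auto
    have below: "c i = 0" if "i < k" for i
    proof (rule ccontr)
      assume "c i \<noteq> 0"
      then have "i < n \<and> c i \<noteq> 0" using that k by simp
      then have "k \<le> i" unfolding k_def by (rule Least_le)
      then show False using that by simp
    qed
    define m where "m = n - k - 1"
    have nm: "n = k + Suc m" using k unfolding m_def by simp
    define w where "w = (\<Sum>i<m. b ^ i * a * c (k + Suc i))"
    have s0: "(\<Sum>i<n. v i * c i) = (\<Sum>i<k. v i * c i) + (\<Sum>i<Suc m. v (k + i) * c (k + i))"
      unfolding nm by (rule sum_split_nat)
    have s1: "(\<Sum>i<k. v i * c i) = 0" using below by simp
    have s2: "(\<Sum>i<Suc m. v (k + i) * c (k + i)) = v k * c k + (\<Sum>i<m. v (k + Suc i) * c (k + Suc i))"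
      by (simp only: sum.lessThan_Suc_shift add_0_right)
    have s3: "(\<Sum>i<m. v (k + Suc i) * c (k + Suc i)) = b ^ k * (b * w)"
    proof -
      have pw: "b ^ (k + Suc i) = b ^ k * (b * b ^ i)" for i by (simp only: power_add power_Suc)
      show ?thesis unfolding w_def v_def pw by (simp only: sum_distrib_left mult.assoc)
    qed
    have s4: "v k * c k = b ^ k * (a * c k)" unfolding v_def by (simp add: mult.assoc)
    have "b ^ k * (a * c k) + b ^ k * (b * w) = 0"
      using c(3) s0 s1 s2 s3 s4 by simp
    then have "b ^ k * (a * c k + b * w) = 0" by (simp add: distrib_left)
    then have eq: "a * c k + b * w = 0" using ab(3) by simp
    then have eq2: "a * c k = - (b * w)" by (simp add: eq_neg_iff_add_eq_0)
    have "q * c k = inverse b * (a * c k)" using ab(4) by (simp add: mult.assoc)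
    also have "\<dots> = inverse b * (- (b * w))" using eq2 by simp
    also have "\<dots> = - w" using ab(3) by (simp add: mult.assoc[symmetric])
    finally have qc: "q * c k = - w" .
    have "q = q * c k * inverse (c k)" using k(2) by (simp add: mult.assoc)
    also have "\<dots> = w * (- inverse (c k))" unfolding qc by simp
    finally have qw: "q = w * (- inverse (c k))" .
    have terms: "\<forall>i\<in>{..<m}. b ^ i * a * c (k + Suc i) \<in> right_span E A"
    proof
      fix i assume "i \<in> {..<m}"
      have "b ^ i * a \<in> right_span E A" using span_base[OF sE] vA[of i] unfolding v_def .
      then show "b ^ i * a * c (k + Suc i) \<in> right_span E A" using span_smult[OF sE] c(1) by blast
    qed
    have wA: "w \<in> right_span E A"
      unfolding w_def by (rule span_sum[OF sE finite_lessThan terms])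
    have "- inverse (c k) \<in> E" using c(1) by (intro nE invE) blast
    then show ?thesis unfolding qw by (rule span_smult[OF sE wA])
  qed
  have "right_fin_dim E (UNIV :: 'a set)"
    unfolding right_fin_dim_def using F(1) all F(3) by (intro exI[of _ F]) auto
  then show False using inf by blast
qed

end
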